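(* Let $i,j\in\mathbb{N}=\{0,1,2,\dots\}$ and let $w\in\{0,1\}^*$ be a $\frac{7}{3}$-power-free word with $|w|=(7+2j)2^i-1$. Let $a\in\{0,1\}$. Then the word $waw$ has a subword $x$ with $|x|\leq 7\cdot 2^i$ such that $x$ is a $\beta$-power for some rational $\beta\ge\frac{7}{3}$.
   Context: A word $w'$ is a subword of $w$ if $w=uw'v$ for some words $u,v$. For a rational $\beta\ge 1$, a $\beta$-power is a word of the form $y^ny'$ with $y$ a nonempty word, $y'$ a prefix of $y$, $n$ a nonnegative integer and $n+|y'|/|y|=\beta$. A word is $\alpha$-power-free if none of its subwords is a $\beta$-power for any rational $\beta\geq\alpha$. *)

theory Defs
  imports Complex_Main "HOL-Library.Sublist"
begin

definition is_subword :: "'a list \<Rightarrow> 'a list \<Rightarrow> bool" where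
  "is_subword x w \<longleftrightarrow> (\<exists>u v. w = u @ x @ v)"

definition is_beta_power :: "'a list \<Rightarrow> rat \<Rightarrow> bool" where
  "is_beta_power x \<beta> \<longleftrightarrow>
     (\<exists>y y' (n::nat). y \<noteq> [] \<and> prefix y' y \<and> x = concat (replicate n y) @ y' \<and>
        of_nat n + of_nat (length y') / of_nat (length y) = \<beta>)"

definition power_free :: "rat \<Rightarrow> 'a list \<Rightarrow> bool" where
  "power_free \<alpha> w \<longleftrightarrow> \<not> (\<exists>x \<beta>. is_subword x w \<and> \<beta> \<ge> \<alpha> \<and> is_beta_power x \<beta>)"

end

theory Submission
  imports Defs
begin

definition mu :: "bool list \<Rightarrow> bool list" where
  "mu xs = concat (map (\<lambda>b. [b, \<not> b]) xs)"

lemma mu_append[simp]: "mu (xs @ ys) = mu xs @ mu ys" by (simp add: mu_def)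
lemma mu_Nil[simp]: "mu [] = []" by (simp add: mu_def)
lemma mu_Cons[simp]: "mu (x # xs) = x # (\<not> x) # mu xs" by (simp add: mu_def)
lemma length_mu[simp]: "length (mu xs) = 2 * length xs" by (induction xs) auto
lemma mu_replicate: "mu (concat (replicate n y)) = concat (replicate n (mu y))"
  by (induction n) auto
lemma mu_prefix: "prefix a b \<Longrightarrow> prefix (mu a) (mu b)"
  by (auto simp: prefix_def)
lemma mu_nth: "p < 2 * length xs \<Longrightarrow> mu xs ! p = (if even p then xs ! (p div 2) else \<not> xs ! (p div 2))"
proof (induction xs arbitrary: p)
  case Nil then show ?case by simp
next
  case (Cons x xs)
  show ?case
  proof (cases p)
    case 0 then show ?thesis by simp
  next
    case (Suc q)
    show ?thesis
    proof (cases q)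
      case 0 then show ?thesis using Suc by simp
    next
      case (Suc r)
      have "r < 2 * length xs" using Cons.prems \<open>p = Suc q\<close> Suc by simp
      then show ?thesis using Cons.IH[of r] \<open>p = Suc q\<close> Suc by simp
    qed
  qed
qed

lemma mu_beta: "is_beta_power x \<beta> \<Longrightarrow> is_beta_power (mu x) \<beta>"
  unfolding is_beta_power_def
proof (elim exE conjE)
  fix y y' n
  assume h: "y \<noteq> []" "prefix y' y" "x = concat (replicate n y) @ y'"
    "rat_of_nat n + rat_of_nat (length y') / rat_of_nat (length y) = \<beta>"
  have r: "rat_of_nat (length (mu y')) / rat_of_nat (length (mu y)) =
        rat_of_nat (length y') / rat_of_nat (length y)" by simp
  have ne: "mu y \<noteq> []" using h(1) by (cases y) auto
  have "mu x = concat (replicate n (mu y)) @ mu y'" using h(3) by (simp add: mu_replicate)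
  then show "\<exists>ya y'a na. ya \<noteq> [] \<and> prefix y'a ya \<and> mu x = concat (replicate na ya) @ y'a \<and>
        rat_of_nat na + rat_of_nat (length y'a) / rat_of_nat (length ya) = \<beta>"
    using h(4) ne mu_prefix[OF h(2)] r
    by (intro exI[of _ "mu y"] exI[of _ "mu y'"] exI[of _ n]) simp
qed

lemma sub_mu: "is_subword x w \<Longrightarrow> is_subword (mu x) (mu w)"
  unfolding is_subword_def by (metis mu_append)

lemma sub_trans: "is_subword x y \<Longrightarrow> is_subword y z \<Longrightarrow> is_subword x z"
  unfolding is_subword_def by (metis append.assoc)

lemma sub_take_drop: "k + m \<le> length W \<Longrightarrow> is_subword (take m (drop k W)) W"
  unfolding is_subword_def
  by (rule exI[of _ "take k W"], rule exI[of _ "drop m (drop k W)"]) (metis append_take_drop_id)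

lemma take_drop_map: "k + m \<le> length W \<Longrightarrow> take m (drop k W) = map (\<lambda>t. W ! (k + t)) [0..<m]"
  by (rule nth_equalityI) auto

definition ns :: "bool list \<Rightarrow> bool" where
  "ns W \<longleftrightarrow> (\<forall>x \<beta>. is_subword x W \<longrightarrow> length x \<le> 7 \<longrightarrow> \<beta> \<ge> 7/3 \<longrightarrow> \<not> is_beta_power x \<beta>)"

lemma powA: "is_beta_power [c,c,c] 3"
  unfolding is_beta_power_def
  by (rule exI[of _ "[c]"], rule exI[of _ "[]"], rule exI[of _ 3]) (simp add: numeral_3_eq_3)

lemma powB: "is_beta_power [p,q,p,q,p] (5/2)"
  unfolding is_beta_power_def
  by (rule exI[of _ "[p,q]"], rule exI[of _ "[p]"], rule exI[of _ 2]) (simp add: numeral_2_eq_2)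

lemma powC: "is_beta_power [p,q,r,p,q,r,p] (7/3)"
  unfolding is_beta_power_def
  by (rule exI[of _ "[p,q,r]"], rule exI[of _ "[p]"], rule exI[of _ 2]) (simp add: numeral_2_eq_2)

lemma nsA: assumes "ns W" "k + 2 < length W" "W!k = W!(k+1)" shows "W!(k+1) \<noteq> W!(k+2)"
proof
  assume h: "W!(k+1) = W!(k+2)"
  have "take 3 (drop k W) = [W!k, W!(k+1), W!(k+2)]"
    using assms(2) by (simp add: take_drop_map numeral_3_eq_3 upt_rec)
  then have "is_subword [W!k, W!k, W!k] W" using sub_take_drop[of k 3 W] assms h by simp
  then show False using assms(1) powA[of "W!k"] unfolding ns_def by fastforce
qed

lemma nsB: assumes "ns W" "W!k = W!(k+2)" "W!(k+1) = W!(k+3)" "W!(k+2) = W!(k+4)" "k + 4 < length W"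
  shows False
proof -
  have "take 5 (drop k W) = [W!k, W!(k+1), W!(k+2), W!(k+3), W!(k+4)]"
    using assms(5) by (simp add: take_drop_map eval_nat_numeral upt_rec)
  then have "is_subword [W!k, W!(k+1), W!k, W!(k+1), W!k] W" using sub_take_drop[of k 5 W] assms by simp
  then show False using assms(1) powB[of "W!k" "W!(k+1)"] unfolding ns_def by fastforce
qed

lemma nsC: assumes "ns W" "W!k = W!(k+3)" "W!(k+1) = W!(k+4)" "W!(k+2) = W!(k+5)"
   "W!(k+3) = W!(k+6)" "k + 6 < length W"
  shows False
proof -
  have "take 7 (drop k W) = [W!k, W!(k+1), W!(k+2), W!(k+3), W!(k+4), W!(k+5), W!(k+6)]"
    using assms(6) by (simp add: take_drop_map eval_nat_numeral upt_rec)
  then have "is_subword [W!k, W!(k+1), W!(k+2), W!k, W!(k+1), W!(k+2), W!k] W"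
    using sub_take_drop[of k 7 W] assms by simp
  then show False using assms(1) powC[of "W!k" "W!(k+1)" "W!(k+2)"] unfolding ns_def by fastforce
qed

lemma parity:
  assumes ns: "ns W"
  shows "1 \<le> k \<Longrightarrow> k < k' \<Longrightarrow> k' + 2 < length W \<Longrightarrow> W!k = W!(Suc k) \<Longrightarrow>
    W!k' = W!(Suc k') \<Longrightarrow> even (k' - k)"
proof (induction "k' - k" arbitrary: k k' rule: less_induct)
  case less
  show ?case
  proof (cases "\<exists>m. k < m \<and> m < k' \<and> W!m = W!(Suc m)")
    case True
    then obtain m where m: "k < m" "m < k'" "W!m = W!(Suc m)" by blast
    have "even (m - k)" using less.hyps[of m k] less.prems m by simp
    moreover have "even (k' - m)" using less.hyps[of k' m] less.prems m by simp
    moreover have "k' - k = (k' - m) + (m - k)" using m by simp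
    ultimately show ?thesis by simp
  next
    case False
    then have nd: "\<And>m. k < m \<Longrightarrow> m < k' \<Longrightarrow> W!m \<noteq> W!(Suc m)" by blast
    consider "k' = k+1" | "k' = k+2" | "k' = k+3" | "k' = k+4" | "k' \<ge> k+5" using less.prems by linarith
    then show ?thesis
    proof cases
      case 1
      then show ?thesis using nsA[OF ns, of k] less.prems by simp
    next
      case 2 then show ?thesis by simp
    next
      case 3
      obtain k0 where k0: "k = Suc k0" using less.prems by (cases k) auto
      have a1: "W!k0 \<noteq> W!k" using nsA[OF ns, of k0] less.prems k0 by (auto simp: numeral_eq_Suc)
      have "W!(k+3+1) \<noteq> W!(k+3+2)" apply (rule nsA[OF ns]) using less.prems 3 by (auto simp: numeral_eq_Suc)
      then have a2: "W!(k+4) \<noteq> W!(k+5)" by (simp add: numeral_eq_Suc)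
      have n1: "W!(k+1) \<noteq> W!(k+2)" using nd[of "k+1"] 3 by (simp add: numeral_eq_Suc)
      have n2: "W!(k+2) \<noteq> W!(k+3)" using nd[of "k+2"] 3 by (simp add: numeral_eq_Suc)
      have d1: "W!k = W!(k+1)" using less.prems by (simp add: numeral_eq_Suc)
      have d2: "W!(k+3) = W!(k+4)" using less.prems 3 by (simp add: numeral_eq_Suc)
      have e1: "W!k0 = W!(k0+3)" using a1 n1 d1 k0 by (auto simp: numeral_eq_Suc)
      have e2: "W!(k0+1) = W!(k0+4)" using d1 d2 n1 n2 k0 by (auto simp: numeral_eq_Suc)
      have e3: "W!(k0+2) = W!(k0+5)" using n1 n2 d1 d2 k0 by (auto simp: numeral_eq_Suc)
      have e4: "W!(k0+3) = W!(k0+6)" using n2 d2 a2 k0 by (auto simp: numeral_eq_Suc)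
      show ?thesis using nsC[OF ns e1 e2 e3 e4] less.prems 3 k0 by (simp add: numeral_eq_Suc)
    next
      case 4 then show ?thesis by simp
    next
      case 5
      have n1: "W!(k+1) \<noteq> W!(k+2)" using nd[of "k+1"] 5 by (simp add: numeral_eq_Suc)
      have n2: "W!(k+2) \<noteq> W!(k+3)" using nd[of "k+2"] 5 by (simp add: numeral_eq_Suc)
      have n3: "W!(k+3) \<noteq> W!(k+4)" using nd[of "k+3"] 5 by (simp add: numeral_eq_Suc)
      have n4: "W!(k+4) \<noteq> W!(k+5)" using nd[of "k+4"] 5 by (simp add: numeral_eq_Suc)
      have e1: "W!(k+1) = W!(k+1+2)" using n1 n2 by (auto simp: numeral_eq_Suc)
      have e2: "W!(k+1+1) = W!(k+1+3)" using n2 n3 by (auto simp: numeral_eq_Suc)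
      have e3: "W!(k+1+2) = W!(k+1+4)" using n3 n4 by (auto simp: numeral_eq_Suc)
      show ?thesis using nsB[OF ns e1 e2 e3] less.prems 5 by (simp add: numeral_eq_Suc)
    qed
  qed
qed

lemma parity2:
  assumes "ns W" "1 \<le> p" "1 \<le> q" "p + 2 < length W" "q + 2 < length W"
    "W!p = W!(Suc p)" "W!q = W!(Suc q)"
  shows "even p \<longleftrightarrow> even q"
proof -
  consider "p < q" | "q < p" | "p = q" by linarith
  then show ?thesis
  proof cases
    case 1
    have "even (q - p)" using parity[OF assms(1), of p q] assms 1 by simp
    moreover have "q = (q - p) + p" using 1 by simp
    ultimately show ?thesis by (metis even_add)
  next
    case 2
    have "even (p - q)" using parity[OF assms(1), of q p] assms 2 by simp
    moreover have "p = (p - q) + q" using 2 by simp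
    ultimately show ?thesis by (metis even_add)
  qed simp
qed

lemma pf_ns: "power_free (7/3) w \<Longrightarrow> ns w"
  unfolding power_free_def ns_def by blast

lemma pf_sub: "power_free \<alpha> w \<Longrightarrow> is_subword v w \<Longrightarrow> power_free \<alpha> v"
  unfolding power_free_def using sub_trans by blast

lemma finish:
  fixes y w W :: "bool list"
  assumes IH: "\<And>w::bool list. \<And>a. power_free (7/3) w \<Longrightarrow> length w = L \<Longrightarrow>
      \<exists>x \<beta>. is_subword x (w @ [a] @ w) \<and> length x \<le> B \<and> \<beta> \<ge> 7/3 \<and> is_beta_power x \<beta>"
    and pf: "power_free (7/3) w" and s1: "is_subword (mu y) w" and len: "length y = L"
    and s2: "is_subword (mu (y @ [b] @ y)) W"
  shows "\<exists>x \<beta>. is_subword x W \<and> length x \<le> 2 * B \<and> \<beta> \<ge> 7/3 \<and> is_beta_power x \<beta>"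
proof -
  have "power_free (7/3) y"
    unfolding power_free_def
  proof
    assume "\<exists>x \<beta>. is_subword x y \<and> 7/3 \<le> \<beta> \<and> is_beta_power x \<beta>"
    then obtain x \<beta> where "is_subword x y" "7/3 \<le> \<beta>" "is_beta_power x \<beta>" by blast
    then have "is_subword (mu x) w" "is_beta_power (mu x) \<beta>"
      using sub_mu sub_trans s1 mu_beta by blast+
    then show False using pf \<open>7/3 \<le> \<beta>\<close> unfolding power_free_def by blast
  qed
  then obtain x \<beta> where x: "is_subword x (y @ [b] @ y)" "length x \<le> B" "\<beta> \<ge> 7/3" "is_beta_power x \<beta>"
    using IH[of y b] \<open>power_free (7/3) y\<close> len by blast
  then have "is_subword (mu x) W" using sub_mu sub_trans s2 by blast
  then show ?thesis using x mu_beta by (intro exI[of _ "mu x"] exI[of _ \<beta>]) simp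
qed

lemma Wl: "k < length w \<Longrightarrow> (w @ [a] @ w) ! k = w ! k" by (simp add: nth_append)
lemma Wm: "(w @ [a] @ w) ! (length w) = a" by (simp add: nth_append)
lemma Wr: "k < length w \<Longrightarrow> (w @ [a] @ w) ! (Suc (length w + k)) = w ! k" by (simp add: nth_append)

lemma noalt: assumes "ns w" "k + 4 < length w" "w!k \<noteq> w!(k+1)" "w!(k+1) \<noteq> w!(k+2)"
  "w!(k+2) \<noteq> w!(k+3)" "w!(k+3) \<noteq> w!(k+4)" shows False
proof -
  have "w!k = w!(k+2)" "w!(k+1) = w!(k+3)" "w!(k+2) = w!(k+4)" using assms by auto
  then show False using nsB[OF assms(1)] assms(2) by blast
qed

lemma nsW_of:
  assumes nex: "\<not> (\<exists>x \<beta>. is_subword x W \<and> length x \<le> B \<and> \<beta> \<ge> 7/3 \<and> is_beta_power x \<beta>)"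
    and B: "7 \<le> B"
  shows "ns W"
  unfolding ns_def
proof (intro allI impI notI)
  fix x \<beta> assume h: "is_subword x W" "length x \<le> 7" "\<beta> \<ge> 7/3" "is_beta_power x \<beta>"
  show False
    apply (rule notE[OF nex])
    apply (rule exI[of _ x], rule exI[of _ \<beta>])
    using h B by simp
qed

lemma noalt0: "ns w \<Longrightarrow> 4 < length w \<Longrightarrow> w!0 \<noteq> w!1 \<Longrightarrow> w!1 \<noteq> w!2 \<Longrightarrow>
   w!2 \<noteq> w!3 \<Longrightarrow> w!3 \<noteq> w!4 \<Longrightarrow> False"
  using noalt[of w 0] unfolding add_0 by blast

lemma noalt1: "ns w \<Longrightarrow> 5 < length w \<Longrightarrow> w!1 \<noteq> w!2 \<Longrightarrow> w!2 \<noteq> w!3 \<Longrightarrow>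
   w!3 \<noteq> w!4 \<Longrightarrow> w!4 \<noteq> w!5 \<Longrightarrow> False"
  using noalt[of w 1] unfolding one_add_one[symmetric] by (simp only: numeral_Bit1 numeral_Bit0 numeral_One add.assoc) blast

lemma main:
  fixes i j :: nat and w :: "bool list" and a :: bool
  assumes "power_free (7/3) w"
    and "length w = (7 + 2*j) * 2^i - 1"
  shows "\<exists>x \<beta>. is_subword x (w @ [a] @ w) \<and> length x \<le> 7 * 2^i \<and>
           \<beta> \<ge> 7/3 \<and> is_beta_power x \<beta>"
  using assms
proof (induction i arbitrary: w a)
  case 0
  define n where "n = length w"
  have n: "n = 6 + 2*j" using 0(2) n_def by simp
  have nsw: "ns w" using pf_ns 0(1) by blast
  show ?case
  proof (rule ccontr)
    assume nex: "\<not> ?case"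
    have nsW: "ns (w @ [a] @ w)" using nsW_of[OF nex] by simp
    have lenW: "length (w @ [a] @ w) = 2*n+1" using n_def by simp
    show False
    proof (cases "\<exists>k. 1 \<le> k \<and> k \<le> 3 \<and> w!k = w!(Suc k)")
      case True
      then obtain k where k: "1 \<le> k" "k \<le> 3" "w!k = w!(Suc k)" by blast
      have l1: "(w @ [a] @ w)!k = (w @ [a] @ w)!(Suc k)"
        using Wl[of k w a] Wl[of "Suc k" w a] k n n_def by simp
      have l2: "(w @ [a] @ w)!(Suc (n + k)) = (w @ [a] @ w)!(Suc (Suc (n + k)))"
        using Wr[of k w a] Wr[of "Suc k" w a] k n n_def by simp
      have "even k \<longleftrightarrow> even (Suc (n + k))"
        by (rule parity2[OF nsW _ _ _ _ l1 l2]) (use k n lenW in simp_all)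
      then show False using n by simp
    next
      case False
      then have "\<not>(1 \<le> (1::nat) \<and> (1::nat) \<le> 3 \<and> w!1 = w!(Suc 1))"
        "\<not>(1 \<le> (2::nat) \<and> (2::nat) \<le> 3 \<and> w!2 = w!(Suc 2))"
        "\<not>(1 \<le> (3::nat) \<and> (3::nat) \<le> 3 \<and> w!3 = w!(Suc 3))" by blast+
      then have nd: "w!1 \<noteq> w!2" "w!2 \<noteq> w!3" "w!3 \<noteq> w!4" by (simp_all add: eval_nat_numeral)
      have len4: "4 < length w" and len5: "5 < length w" using n n_def by simp_all
      have wne: "w \<noteq> []" using len4 by auto
      have d0: "w!0 = w!1"
      proof (rule ccontr)
        assume h: "w!0 \<noteq> w!1" show False using noalt0[OF nsw len4 h nd] .
      qed
      have d4: "w!4 = w!5"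
      proof (rule ccontr)
        assume h: "w!4 \<noteq> w!5" show False using noalt1[OF nsw len5 nd h] .
      qed
      have l1: "(w @ [a] @ w)!4 = (w @ [a] @ w)!(Suc 4)"
        using Wl[of 4 w a] Wl[of "5" w a] d4 n n_def by simp
      have l2: "(w @ [a] @ w)!(Suc (n + 0)) = (w @ [a] @ w)!(Suc (Suc (n + 0)))"
        using Wr[of 0 w a] Wr[of "1" w a] d0 n n_def wne by simp
      have "even (4::nat) \<longleftrightarrow> even (Suc (n + 0))"
        by (rule parity2[OF nsW _ _ _ _ l1 l2]) (use n lenW in simp_all)
      then show False using n by simp
    qed
  qed
next
  case (Suc i)
  define n where "n = length w"
  define m where "m = (7 + 2*j) * 2^i - 1"
  have pos: "(7 + 2*j) * 2^i \<ge> 7" by (metis mult_le_mono le_add1 nat_mult_1_right one_le_power one_le_numeral)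
  have n: "n = 2*m+1" using Suc.prems(2) n_def m_def pos by simp
  have m6: "m \<ge> 6" using pos m_def by simp
  have nsw: "ns w" using pf_ns Suc.prems(1) by blast
  show ?case
  proof (rule ccontr)
    assume nex: "\<not> ?case"
    have nsW: "ns (w @ [a] @ w)" using nsW_of[OF nex] by simp
    have lenW: "length (w @ [a] @ w) = 2*n+1" using n_def by simp
    define W where "W = w @ [a] @ w"
    have nsW': "ns W" using nsW W_def by simp
    have lenW': "length W = 2*n+1" using lenW W_def by simp
    have n13: "n \<ge> 13" using n m6 by simp
    have wne': "w \<noteq> []" using n13 n_def by auto
    have img: "\<exists>p. 1 \<le> p \<and> p + 2 < length W \<and> W!p = W!(Suc p) \<and> (even p \<longleftrightarrow> even k)"
      if k: "k + 1 < n" "w!k = w!(Suc k)" for k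
    proof (cases k)
      case 0
      have "W!(Suc (n + 0)) = W!(Suc (Suc (n + 0)))"
        using Wr[of 0 w a] Wr[of 1 w a] k 0 wne' n_def W_def by simp
      then show ?thesis using lenW' n13 n 0
        by (intro exI[of _ "Suc n"]) simp
    next
      case (Suc k1)
      have "W!k = W!(Suc k)"
        using Wl[of k w a] Wl[of "Suc k" w a] k n_def W_def by simp
      then show ?thesis using lenW' k Suc
        by (intro exI[of _ k]) simp
    qed
    have same: "even k \<longleftrightarrow> even k'"
      if hh: "k + 1 < n" "w!k = w!(Suc k)" "k' + 1 < n" "w!k' = w!(Suc k')" for k k'
    proof -
      obtain p where p: "1 \<le> p" "p + 2 < length W" "W!p = W!(Suc p)" "even p \<longleftrightarrow> even k"
        using img[OF hh(1,2)] by blast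
      obtain q where q: "1 \<le> q" "q + 2 < length W" "W!q = W!(Suc q)" "even q \<longleftrightarrow> even k'"
        using img[OF hh(3,4)] by blast
      show ?thesis using parity2[OF nsW' p(1) q(1) p(2) q(2) p(3) q(3)] p(4) q(4) by simp
    qed
    have len4: "4 < length w" using n13 n_def by simp
    obtain k0 where k0: "k0 + 1 < n" "w!k0 = w!(Suc k0)"
    proof -
      have "w!0 = w!1 \<or> w!1 = w!2 \<or> w!2 = w!3 \<or> w!3 = w!4"
        using noalt0[OF nsw len4] by blast
      then show ?thesis
      proof (elim disjE)
        assume "w!0 = w!1" then show ?thesis using that[of 0] n13 by simp
      next
        assume "w!1 = w!2" then show ?thesis using that[of 1] n13 by (simp add: numeral_2_eq_2)
      next
        assume "w!2 = w!3" then show ?thesis using that[of 2] n13 by (simp add: numeral_3_eq_3 numeral_2_eq_2)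
      next
        assume "w!3 = w!4" then show ?thesis using that[of 3] n13 by (simp add: eval_nat_numeral)
      qed
    qed
    have IH: "\<And>(w'::bool list) a'. power_free (7/3) w' \<Longrightarrow> length w' = m \<Longrightarrow>
      \<exists>x \<beta>. is_subword x (w' @ [a'] @ w') \<and> length x \<le> 7 * 2^i \<and> \<beta> \<ge> 7/3 \<and> is_beta_power x \<beta>"
      using Suc.IH m_def by blast
    have fin: "False" if "is_subword (mu y) w" "length y = m" "is_subword (mu (y @ [b] @ y)) W" for y b
    proof -
      have "\<exists>x \<beta>. is_subword x W \<and> length x \<le> 2 * (7 * 2^i) \<and> \<beta> \<ge> 7/3 \<and> is_beta_power x \<beta>"
        by (rule finish[OF IH Suc.prems(1) that])
      then show False using nex W_def by (simp add: mult.left_commute)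
    qed
    show False
    proof (cases "even k0")
      case True
      have hQ: "w!k \<noteq> w!(Suc k)" if "k + 1 < n" "odd k" for k
        using same[OF that(1) _ k0] that(2) True by blast
      define c where "c = w!0"
      have ha: "c = (\<not> a)"
      proof (rule ccontr)
        assume "c \<noteq> (\<not> a)"
        then have "W!n = W!(Suc n)" using Wm[of w a] Wr[of 0 w a] wne' n_def W_def c_def by simp
        moreover obtain p where p: "1 \<le> p" "p + 2 < length W" "W!p = W!(Suc p)" "even p \<longleftrightarrow> even k0"
          using img[OF k0] by blast
        ultimately have "even p \<longleftrightarrow> even n"
          by (intro parity2[OF nsW' p(1) _ p(2) _ p(3)]) (use lenW' n13 in simp_all)
        then show False using n True p(4) by simp
      qed
      define y where "y = map (\<lambda>t. w!(2*t+1)) [0..<m]"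
      have wy: "w = c # mu y"
      proof (rule nth_equalityI)
        show "length w = length (c # mu y)" using n n_def y_def by simp
      next
        fix p assume "p < length w"
        then show "w!p = (c # mu y)!p"
        proof (cases p)
          case 0 then show ?thesis using c_def by simp
        next
          case (Suc q)
          have q: "q < 2 * length y" using \<open>p < length w\<close> Suc n n_def y_def by simp
          have "q div 2 < m" using q y_def by simp
          then have yq: "y!(q div 2) = w!(2*(q div 2)+1)" using y_def by simp
          show ?thesis
          proof (cases "even q")
            case True
            then show ?thesis using mu_nth[OF q] yq Suc by simp
          next
            case False
            have "w!q \<noteq> w!(Suc q)" using hQ[of q] False \<open>p < length w\<close> Suc n_def by simp
            moreover have "2*(q div 2)+1 = q" using False by simp
            ultimately show ?thesis using mu_nth[OF q] yq Suc False by simp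
          qed
        qed
      qed
      have s1: "is_subword (mu y) w" unfolding is_subword_def
        by (rule exI[of _ "[c]"], rule exI[of _ "[]"]) (use wy in simp)
      have s2: "is_subword (mu (y @ [a] @ y)) W" unfolding is_subword_def
        by (rule exI[of _ "[c]"], rule exI[of _ "[]"]) (use wy ha W_def in simp)
      show False using fin[OF s1 _ s2] y_def by simp
    next
      case False
      have hP: "w!k \<noteq> w!(Suc k)" if "k + 1 < n" "even k" for k
        using same[OF that(1) _ k0] that(2) False by blast
      define c where "c = w!(2*m)"
      have Wn1: "W!(2*m) = c" using Wl[of "2*m" w a] n n_def W_def c_def by simp
      have Wn: "W!(Suc (2*m)) = a" using n n_def W_def by (simp add: nth_append)
      have ha: "a = (\<not> c)"
      proof (rule ccontr)
        assume "a \<noteq> (\<not> c)"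
        then have "W!(2*m) = W!(Suc (2*m))" using Wn1 Wn by simp
        moreover obtain p where p: "1 \<le> p" "p + 2 < length W" "W!p = W!(Suc p)" "even p \<longleftrightarrow> even k0"
          using img[OF k0] by blast
        ultimately have "even p \<longleftrightarrow> even (2*m)"
          by (intro parity2[OF nsW' p(1) _ p(2) _ p(3)]) (use lenW' n m6 in simp_all)
        then show False using False p(4) by simp
      qed
      define y where "y = map (\<lambda>t. w!(2*t)) [0..<m]"
      have wy: "w = mu y @ [c]"
      proof (rule nth_equalityI)
        show "length w = length (mu y @ [c])" using n n_def y_def by simp
      next
        fix p assume p: "p < length w"
        show "w!p = (mu y @ [c])!p"
        proof (cases "p < 2*m")
          case False
          then have "p = 2*m" using p n n_def by simp
          then show ?thesis using c_def y_def by (simp add: nth_append)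
        next
          case True
          have q: "p < 2 * length y" using True y_def by simp
          have "p div 2 < m" using q y_def by simp
          then have yq: "y!(p div 2) = w!(2*(p div 2))" using y_def by simp
          show ?thesis
          proof (cases "even p")
            case True
            then show ?thesis using mu_nth[OF q] yq q by (simp add: nth_append)
          next
            case False
            then obtain r where r: "p = Suc r" by (cases p) auto
            have "w!r \<noteq> w!(Suc r)" using hP[of r] False r p n_def by simp
            moreover have "2*(p div 2) = r" using False r by simp
            ultimately show ?thesis using mu_nth[OF q] yq q False r by (simp add: nth_append)
          qed
        qed
      qed
      have s1: "is_subword (mu y) w" unfolding is_subword_def
        by (rule exI[of _ "[]"], rule exI[of _ "[c]"]) (use wy in simp)
      have s2: "is_subword (mu (y @ [c] @ y)) W" unfolding is_subword_def
        by (rule exI[of _ "[]"], rule exI[of _ "[c]"]) (use wy ha W_def in simp)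
      show False using fin[OF s1 _ s2] y_def by simp
    qed
  qed
qed

theorem lemma5:
  fixes i j :: nat and w :: "bool list" and a :: bool
  assumes "power_free (7/3) w"
    and "length w = (7 + 2*j) * 2^i - 1"
  shows "\<exists>x \<beta>. is_subword x (w @ [a] @ w) \<and> length x \<le> 7 * 2^i \<and>
           \<beta> \<ge> 7/3 \<and> is_beta_power x \<beta>"
  using main[OF assms] .

end
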